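(* In the setting described in the context, let $(\mathcal{M}_i)_{i=1}^n$ be mMVNNs and let $\hat{\mathcal{X}}_i^*(p)=\arg\max_{x\in\mathcal{X}}\{\mathcal{M}_i(x)-\langle p,x\rangle\}$. Then there exists a dense subset $P\subseteq\mathbb{R}^m_{\ge0}$ such that $\mathbb{R}^m_{\ge0}\setminus P$ has $m$-dimensional Lebesgue measure zero and for every $p\in P$: (1) for each $i\in N$ there is a unique maximizer, i.e., $\hat{\mathcal{X}}_i^*(p)=\{\hat x_i^*(p)\}$; (2) the map $p\mapsto W(p,(\mathcal{M}_i)_{i=1}^n)$ is differentiable at $p$ with gradient $\nabla_pW(p,(\mathcal{M}_i)_{i=1}^n)=c-\sum_{i\in N}\hat x_i^*(p)$, which is also the unique sub-gradient, i.e., $\partial_pW(p,(\mathcal{M}_i)_{i=1}^n)=\{c-\sum_{i\in N}\hat x_i^*(p)\}$; (3) each unique maximizer $\hat x_i^*(\cdot)$ is constant on a neighbourhood of $p$, and thus $\partial_p\hat x_i^*(p)=0$.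
   Context: Items $M=\{1,\ldots,m\}$ have capacities $c\in\mathbb{N}^m$; $\mathcal{X}=\{0,\ldots,c_1\}\times\cdots\times\{0,\ldots,c_m\}$; bidders $N=\{1,\ldots,n\}$; $\mathcal{F}=\{a\in\mathcal{X}^n:\sum_{i}a_{ij}\le c_j\ \forall j\}$. For $p\in\mathbb{R}^m_{\ge0}$: $U(p,\mathcal{M}_i)=\max_{x\in\mathcal{X}}\{\mathcal{M}_i(x)-\langle p,x\rangle\}$, $R(p)=\max_{a\in\mathcal{F}}\sum_i\langle p,a_i\rangle=\sum_j c_jp_j$, $W(p,(\mathcal{M}_i)_{i=1}^n)=R(p)+\sum_{i\in N}U(p,\mathcal{M}_i)$. Sub-gradients are understood for the convex function $p\mapsto\langle c,p\rangle+\sum_i U(p,\mathcal{M}_i)$ (this formula defines it on all of $\mathbb{R}^m$), evaluated at $p\in\mathbb{R}^m_{\ge0}$. An mMVNN is a map $\mathcal{M}:\mathcal{X}\to\mathbb{R}_{\ge0}$ of the form $\mathcal{M}(x)=W^{K}\varphi_{0,t^{K-1}}(\cdots\varphi_{0,t^1}(W^1(Dx)+b^1)\cdots)$, with $\varphi_{0,t}(z)=\min(t,\max(0,z))$ componentwise, cutoffs $t^k>0$, non-negative weight matrices $W^k\in\mathbb{R}^{d^k\times d^{k-1}}$ ($d^0=m$, $d^K=1$), non-positive bias vectors $b^k$, and $D=\mathrm{diag}(1/c_1,\ldots,1/c_m)$. *)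

theory Defs
  imports "HOL-Analysis.Analysis"
begin

text \<open>Items are indexed by a finite type 'm (so m = CARD('m)); prices and bundles
  live in real^'m. Capacities c :: 'm => nat. Bidders are 0,...,n-1.\<close>

definition bundles :: "('m::finite \<Rightarrow> nat) \<Rightarrow> (real^'m) set" where
  "bundles c = {x. \<forall>j. x$j \<in> \<int> \<and> 0 \<le> x$j \<and> x$j \<le> real (c j)}"

definition capvec :: "('m::finite \<Rightarrow> nat) \<Rightarrow> real^'m" where
  "capvec c = (\<chi> j. real (c j))"

definition nonneg_orthant :: "(real^'m::finite) set" where
  "nonneg_orthant = {p. \<forall>j. 0 \<le> p$j}"

definition indirect_util :: "('m::finite \<Rightarrow> nat) \<Rightarrow> (real^'m \<Rightarrow> real) \<Rightarrow> real^'m \<Rightarrow> real" where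
  "indirect_util c M p = Max ((\<lambda>x. M x - inner p x) ` bundles c)"

definition demand :: "('m::finite \<Rightarrow> nat) \<Rightarrow> (real^'m \<Rightarrow> real) \<Rightarrow> real^'m \<Rightarrow> (real^'m) set" where
  "demand c M p = {x \<in> bundles c. \<forall>y \<in> bundles c. M y - inner p y \<le> M x - inner p x}"

text \<open>Revenue R(p) = max over feasible allocations = sum_j c_j p_j.\<close>
definition revenue :: "('m::finite \<Rightarrow> nat) \<Rightarrow> real^'m \<Rightarrow> real" where
  "revenue c p = inner (capvec c) p"

definition Wfun :: "('m::finite \<Rightarrow> nat) \<Rightarrow> nat \<Rightarrow> (nat \<Rightarrow> real^'m \<Rightarrow> real) \<Rightarrow> real^'m \<Rightarrow> real" where
  "Wfun c n M p = revenue c p + (\<Sum>i<n. indirect_util c (M i) p)"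

definition subgradients :: "(real^'m::finite \<Rightarrow> real) \<Rightarrow> real^'m \<Rightarrow> (real^'m) set" where
  "subgradients f p = {g. \<forall>q. f p + inner g (q - p) \<le> f q}"

definition phi_cut :: "real \<Rightarrow> real \<Rightarrow> real" where
  "phi_cut t z = min t (max 0 z)"

text \<open>Pre-activations of an mMVNN with K layers: mvnn_pre ... k is z^(k+1).
  z^1 = W^1 (D x) + b^1,  z^(k+1) = W^(k+1) phi_(t^k)(z^k) + b^(k+1); the last
  layer K has no bias (b^K treated as 0). W1 i j is the (i,j) entry of W^1,
  W k i l the (i,l) entry of W^k for k >= 2, b k i the i-th entry of b^k,
  t k the cutoff t^k, d k = d^k.\<close>
primrec mvnn_pre :: "nat \<Rightarrow> (nat \<Rightarrow> nat) \<Rightarrow> (nat \<Rightarrow> 'm::finite \<Rightarrow> real)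
    \<Rightarrow> (nat \<Rightarrow> nat \<Rightarrow> nat \<Rightarrow> real) \<Rightarrow> (nat \<Rightarrow> nat \<Rightarrow> real) \<Rightarrow> (nat \<Rightarrow> real)
    \<Rightarrow> ('m \<Rightarrow> nat) \<Rightarrow> real^'m \<Rightarrow> nat \<Rightarrow> nat \<Rightarrow> real" where
  "mvnn_pre K d W1 W b t c x 0 i =
     (\<Sum>j\<in>UNIV. W1 i j * (x$j / real (c j))) + (if 1 < K then b 1 i else 0)"
| "mvnn_pre K d W1 W b t c x (Suc k) i =
     (\<Sum>l<d (Suc k). W (k+2) i l * phi_cut (t (Suc k)) (mvnn_pre K d W1 W b t c x k l))
     + (if k + 2 < K then b (k+2) i else 0)"

definition mMVNN :: "('m::finite \<Rightarrow> nat) \<Rightarrow> (real^'m \<Rightarrow> real) \<Rightarrow> bool" where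
  "mMVNN c M \<longleftrightarrow> (\<exists>K d W1 W b t. 1 \<le> K \<and> d 0 = CARD('m) \<and> d K = 1 \<and>
     (\<forall>i j. 0 \<le> W1 i j) \<and> (\<forall>k i l. 0 \<le> W k i l) \<and> (\<forall>k i. b k i \<le> 0) \<and>
     (\<forall>k. 0 < t k) \<and>
     (\<forall>x \<in> bundles c. M x = mvnn_pre K d W1 W b t c x (K - 1) 0))"

end

theory Submission
  imports Defs
begin

lemma finite_bundles: "finite (bundles (c::'m::finite \<Rightarrow> nat))"
proof -
  have "bundles c \<subseteq> (\<lambda>f. \<chi> j. real (f j)) ` (PiE UNIV (\<lambda>j. {..c j}))"
  proof
    fix x assume x: "x \<in> bundles c"
    have "\<forall>j. x$j = real (nat \<lfloor>x$j\<rfloor>)"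
    proof
      fix j
      from x have "x$j \<in> \<int>" "0 \<le> x$j" unfolding bundles_def by auto
      then show "x$j = real (nat \<lfloor>x$j\<rfloor>)" by (metis Ints_cases floor_of_int of_int_0_le_iff of_nat_nat)
    qed
    moreover have "(\<lambda>j. nat \<lfloor>x$j\<rfloor>) \<in> PiE UNIV (\<lambda>j. {..c j})"
      using x unfolding bundles_def by (auto simp: nat_le_iff floor_le_iff le_floor_iff)
         (smt (verit, best))
    ultimately show "x \<in> (\<lambda>f. \<chi> j. real (f j)) ` (PiE UNIV (\<lambda>j. {..c j}))"
      by (intro image_eqI[where x="\<lambda>j. nat \<lfloor>x$j\<rfloor>"]) (auto simp: vec_eq_iff)
  qed
  moreover have "finite (PiE (UNIV::'m set) (\<lambda>j. {..c j}))" by (rule finite_PiE) auto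
  ultimately show ?thesis by (meson finite_imageI finite_subset)
qed

lemma zero_bundles: "0 \<in> bundles c"
  unfolding bundles_def by auto

lemma util_ge: "y \<in> bundles c \<Longrightarrow> M y - inner p y \<le> indirect_util c M p"
  unfolding indirect_util_def by (rule Max_ge) (auto simp: finite_bundles)

lemma util_eq: "x \<in> demand c M p \<Longrightarrow> indirect_util c M p = M x - inner p x"
  unfolding indirect_util_def demand_def
  by (rule Max_eqI) (auto simp: finite_bundles)

lemma demand_ne: "demand c M p \<noteq> {}"
proof -
  let ?S = "(\<lambda>x. M x - inner p x) ` bundles c"
  have "Max ?S \<in> ?S" using zero_bundles[of c] by (intro Max_in) (auto simp: finite_bundles)
  then obtain x where x: "x \<in> bundles c" "Max ?S = M x - inner p x" by auto
  have "\<forall>y \<in> bundles c. M y - inner p y \<le> M x - inner p x"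
    using util_ge[of _ c M p] x unfolding indirect_util_def by auto
  then have "x \<in> demand c M p" using x unfolding demand_def by auto
  then show ?thesis by auto
qed


lemma half_helper: "(0::real) < a \<Longrightarrow> e / (2 * a) * a = e / 2"
  by (simp add: field_simps)

lemma orthant_closed: "closed (nonneg_orthant :: (real^'m::finite) set)"
proof -
  have "nonneg_orthant = (\<Inter>j. {p::real^'m. 0 \<le> p$j})" unfolding nonneg_orthant_def by auto
  moreover have "closed (\<Inter>j. {p::real^'m. 0 \<le> p$j})"
    by (intro closed_INT ballI closed_halfspace_component_ge_cart)
  ultimately show ?thesis by simp
qed

theorem lemma6:
  fixes c :: "'m::finite \<Rightarrow> nat" and n :: nat and M :: "nat \<Rightarrow> real^'m \<Rightarrow> real"
  assumes "\<forall>j. 0 < c j"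
    and "\<forall>i<n. mMVNN c (M i)"
  shows "\<exists>P \<subseteq> nonneg_orthant. nonneg_orthant \<subseteq> closure P \<and>
           nonneg_orthant - P \<in> null_sets lborel \<and>
           (\<forall>p\<in>P. \<exists>xhat :: nat \<Rightarrow> real^'m.
              (\<forall>i<n. demand c (M i) p = {xhat i}) \<and>
              (Wfun c n M has_derivative
                 (\<lambda>h. inner (capvec c - (\<Sum>i<n. xhat i)) h)) (at p) \<and>
              subgradients (Wfun c n M) p = {capvec c - (\<Sum>i<n. xhat i)} \<and>
              (\<forall>i<n. (\<exists>e>0. \<forall>q\<in>ball p e. demand c (M i) q = {xhat i}) \<and>
                 ((\<lambda>q. THE x. demand c (M i) q = {x}) has_derivative (\<lambda>_. 0)) (at p)))"
proof -
  define B where "B = bundles c"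
  have finB: "finite B" unfolding B_def by (rule finite_bundles)
  define hp where "hp = (\<lambda>(i::nat, x::real^'m, y::real^'m). {p::real^'m. (x - y) \<bullet> p = M i x - M i y})"
  define I where "I = {..<n} \<times> {(x, y). x \<in> B \<and> y \<in> B \<and> x \<noteq> y}"
  define H where "H = \<Union> (hp ` I)"
  define P where "P = nonneg_orthant - H"
  have finI: "finite I" unfolding I_def using finB
    by (intro finite_cartesian_product) (auto intro: finite_subset[of _ "B \<times> B"])
  have negH: "negligible H" unfolding H_def
  proof (rule negligible_Union)
    show "finite (hp ` I)" using finI by simp
    fix T assume "T \<in> hp ` I"
    then obtain i x y where "x \<noteq> y" "T = {p. (x - y) \<bullet> p = M i x - M i y}"
      unfolding I_def hp_def by auto
    then show "negligible T" using negligible_hyperplane[of "x - y" "M i x - M i y"] by auto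
  qed
  have closedH: "closed H" unfolding H_def using finI
    by (intro closed_Union) (auto simp: hp_def closed_hyperplane)
  have nullH: "H \<in> null_sets lborel"
  proof -
    have "H \<in> sets lborel" using closedH by simp
    moreover have "H \<in> null_sets lebesgue" using negH negligible_iff_null_sets by blast
    ultimately show ?thesis using null_sets_completion_iff by blast
  qed
  have inH: "p \<in> H" if "i < n" "x \<in> B" "y \<in> B" "x \<noteq> y" "M i x - inner p x = M i y - inner p y" for i x y p
  proof -
    have "(i, x, y) \<in> I" using that unfolding I_def by auto
    moreover have "p \<in> hp (i, x, y)" using that unfolding hp_def by (auto simp: inner_diff_left inner_diff_right inner_commute)
    ultimately show ?thesis unfolding H_def by auto
  qed
  have "P \<subseteq> nonneg_orthant" unfolding P_def by auto
  moreover have "nonneg_orthant \<subseteq> closure P"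
  proof
    fix p :: "real^'m" assume p: "p \<in> nonneg_orthant"
    show "p \<in> closure P" unfolding closure_approachable
    proof (intro allI impI)
      fix e :: real assume e: "0 < e"
      define v :: "real^'m" where "v = (\<chi> j. 1)"
      define d where "d = e / (2 * (norm v + 1))"
      have d: "0 < d" using e unfolding d_def by (intro divide_pos_pos mult_pos_pos) (auto intro: add_nonneg_pos)
      define U where "U = ball p e \<inter> (\<Inter>j. {q::real^'m. 0 < q$j})"
      have "open U" unfolding U_def
        by (intro open_Int open_ball open_INT) (auto intro: open_halfspace_component_gt_cart)
      moreover have "p + d *\<^sub>R v \<in> U"
      proof -
        have "d * norm v < e"
        proof -
          have "d * norm v \<le> d * (norm v + 1)" using d by simp
          also have "\<dots> = e / 2" unfolding d_def by (rule half_helper) (simp add: add_nonneg_pos)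
          finally show ?thesis using e by simp
        qed
        moreover have "\<forall>j. 0 < p$j + d" using p d unfolding nonneg_orthant_def
          by (auto intro: add_nonneg_pos)
        ultimately show ?thesis unfolding U_def v_def using d
          by (auto simp: dist_norm)
      qed
      ultimately have "\<not> negligible U" using open_not_negligible by blast
      then have "\<not> U \<subseteq> H" using negH negligible_subset by blast
      then obtain q where q: "q \<in> U" "q \<notin> H" by auto
      then have "q \<in> P" unfolding P_def U_def nonneg_orthant_def by (auto intro: less_imp_le)
      moreover have "dist q p < e" using q unfolding U_def by (simp add: dist_commute)
      ultimately show "\<exists>y\<in>P. dist y p < e" by blast
    qed
  qed
  moreover have "nonneg_orthant - P \<in> null_sets lborel"
  proof -
    have "nonneg_orthant - P = H \<inter> nonneg_orthant" unfolding P_def by auto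
    moreover have "(nonneg_orthant :: (real^'m) set) \<in> sets lborel" unfolding sets_lborel by (rule borel_closed[OF orthant_closed])
    ultimately show ?thesis using null_set_Int2[OF nullH] by simp
  qed
  moreover have "\<exists>xhat :: nat \<Rightarrow> real^'m.
              (\<forall>i<n. demand c (M i) p = {xhat i}) \<and>
              (Wfun c n M has_derivative
                 (\<lambda>h. inner (capvec c - (\<Sum>i<n. xhat i)) h)) (at p) \<and>
              subgradients (Wfun c n M) p = {capvec c - (\<Sum>i<n. xhat i)} \<and>
              (\<forall>i<n. (\<exists>e>0. \<forall>q\<in>ball p e. demand c (M i) q = {xhat i}) \<and>
                 ((\<lambda>q. THE x. demand c (M i) q = {x}) has_derivative (\<lambda>_. 0)) (at p))"
    if pP: "p \<in> P" for p
  proof -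
    have pH: "p \<notin> H" using pP unfolding P_def by auto
    define xh where "xh = (\<lambda>i. SOME x. x \<in> demand c (M i) p)"
    have xhd: "xh i \<in> demand c (M i) p" for i
      unfolding xh_def using demand_ne[of c "M i" p] by (auto intro: someI_ex)
    have xhB: "xh i \<in> B" for i using xhd[of i] unfolding demand_def B_def by auto
    have strict: "M i y - inner p y < M i (xh i) - inner p (xh i)"
      if "i < n" "y \<in> B" "y \<noteq> xh i" for i y
    proof -
      have "M i y - inner p y \<le> M i (xh i) - inner p (xh i)"
        using xhd[of i] that unfolding demand_def B_def by auto
      moreover have "M i (xh i) - inner p (xh i) \<noteq> M i y - inner p y"
        using inH[of i "xh i" y p] that xhB pH by auto
      ultimately show ?thesis by linarith
    qed
    define Opn where "Opn = (\<Inter>i\<in>{..<n}. \<Inter>y\<in>B - {xh i}.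
        {q. M i y - inner q y < M i (xh i) - inner q (xh i)})"
    have "open Opn" unfolding Opn_def using finB
      by (intro open_INT ballI open_Collect_less) (auto intro!: continuous_intros)
    moreover have "p \<in> Opn" unfolding Opn_def using strict by auto
    ultimately obtain e where e: "0 < e" "ball p e \<subseteq> Opn" using open_contains_ball by blast
    have dem: "demand c (M i) q = {xh i}" if "q \<in> ball p e" "i < n" for q i
    proof -
      have st: "M i y - inner q y < M i (xh i) - inner q (xh i)" if "y \<in> B" "y \<noteq> xh i" for y
        using e \<open>q \<in> ball p e\<close> \<open>i < n\<close> that unfolding Opn_def by blast
      have "xh i \<in> demand c (M i) q" unfolding demand_def
        using st xhB[of i] B_def by (auto intro: less_imp_le)
      moreover have "z = xh i" if "z \<in> demand c (M i) q" for z
      proof (rule ccontr)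
        assume "z \<noteq> xh i"
        moreover have "z \<in> B" using that unfolding demand_def B_def by auto
        ultimately have "M i z - inner q z < M i (xh i) - inner q (xh i)" using st by auto
        moreover have "M i (xh i) - inner q (xh i) \<le> M i z - inner q z"
          using that xhB[of i] unfolding demand_def B_def by auto
        ultimately show False by linarith
      qed
      ultimately show ?thesis by blast
    qed
    define g where "g = capvec c - (\<Sum>i<n. xh i)"
    define C where "C = (\<Sum>i<n. M i (xh i))"
    have Weq: "Wfun c n M q = inner g q + C" if "q \<in> ball p e" for q
    proof -
      have "Wfun c n M q = inner (capvec c) q + (\<Sum>i<n. M i (xh i) - inner q (xh i))"
        unfolding Wfun_def revenue_def
        using util_eq[of _ c _ q] dem[OF that] by (intro arg_cong2[where f="(+)"] refl sum.cong) auto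
      also have "\<dots> = inner g q + C"
        unfolding g_def C_def by (simp add: inner_diff_left inner_diff_right inner_sum_left inner_sum_right sum_subtractf inner_commute)
      finally show ?thesis .
    qed
    have pball: "p \<in> ball p e" using e by simp
    have Wge: "inner g q + C \<le> Wfun c n M q" for q
    proof -
      have "inner g q + C = inner (capvec c) q + (\<Sum>i<n. M i (xh i) - inner q (xh i))"
        unfolding g_def C_def by (simp add: inner_diff_left inner_diff_right inner_sum_left inner_sum_right sum_subtractf inner_commute)
      also have "\<dots> \<le> Wfun c n M q"
        unfolding Wfun_def revenue_def
        using util_ge[of _ c _ q] xhB unfolding B_def by (intro add_left_mono sum_mono) auto
      finally show ?thesis .
    qed
    have "(Wfun c n M has_derivative (\<lambda>h. inner g h)) (at p)"
    proof (rule has_derivative_transform_within_open[where s="ball p e"])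
      show "((\<lambda>q. inner g q + C) has_derivative (\<lambda>h. inner g h)) (at p)"
        by (auto intro!: derivative_eq_intros)
    qed (use Weq pball in auto)
    moreover have "subgradients (Wfun c n M) p = {g}"
    proof
      show "{g} \<subseteq> subgradients (Wfun c n M) p"
        unfolding subgradients_def using Weq[OF pball] Wge by (auto simp: inner_diff_right add.commute)
      show "subgradients (Wfun c n M) p \<subseteq> {g}"
      proof
        fix g' assume "g' \<in> subgradients (Wfun c n M) p"
        then have sg: "\<And>q. Wfun c n M p + inner g' (q - p) \<le> Wfun c n M q"
          unfolding subgradients_def by auto
        define t where "t = e / (2 * (norm (g' - g) + 1))"
        have t: "0 < t" using e unfolding t_def by (intro divide_pos_pos mult_pos_pos) (auto intro: add_nonneg_pos)
        define q where "q = p + t *\<^sub>R (g' - g)"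
        have "t * norm (g' - g) < e"
        proof -
          have "t * norm (g' - g) \<le> t * (norm (g' - g) + 1)" using t by simp
          also have "\<dots> = e / 2" unfolding t_def by (rule half_helper) (simp add: add_nonneg_pos)
          finally show ?thesis using e by simp
        qed
        then have qb: "q \<in> ball p e" unfolding q_def using t by (simp add: dist_norm)
        have "inner g' (q - p) \<le> inner g (q - p)"
          using sg[of q] Weq[OF qb] Weq[OF pball] by (simp add: inner_diff_right)
        then have "t * inner (g' - g) (g' - g) \<le> 0"
          unfolding q_def by (simp add: inner_diff_left algebra_simps)
        then have "inner (g' - g) (g' - g) \<le> 0" using t by (simp add: mult_le_0_iff)
        then have "g' - g = 0" by (metis inner_eq_zero_iff inner_ge_zero order_antisym)
        then show "g' \<in> {g}" by simp
      qed
    qed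
    moreover have "((\<lambda>q. THE x. demand c (M i) q = {x}) has_derivative (\<lambda>_. 0)) (at p)"
      if "i < n" for i
    proof (rule has_derivative_transform_within_open[where s="ball p e"])
      show "((\<lambda>q. xh i) has_derivative (\<lambda>_. 0)) (at p)" by simp
    qed (use dem that pball in auto)
    ultimately show ?thesis
      using dem pball e unfolding g_def by (intro exI[where x=xh]) auto
  qed
  ultimately show ?thesis by blast
qed

end
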